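(* Under the standing setup, for integers $K\ge1$ and $n>K$, and a vertex $v$ with $|v|=n$, let $I_v^K$ be the set of edges of $I_v$ belonging to generations $n-K+1,\dots,n$, and define $\tilde N_n^{(K)}:=\sum_{|v|=n}\sum_{e\in I_v^K}\delta_{b_n^{-1}X_e}$. Let also $\tilde N_n:=\sum_{|v|=n}\sum_{e\in I_v}\delta_{b_n^{-1}X_e}$. Then for every $\epsilon>0$, $$\lim_{K\to\infty}\limsup_{n\to\infty}P^*\big(\rho(\tilde N_n,\tilde N_n^{(K)})>\epsilon\big)=0.$$
   Context: Standing setup. Let $\{Z_i\}_{i\ge0}$ be a Galton–Watson process with $Z_0\equiv1$ and offspring variable $Z_1$ with mean $\mu:=E(Z_1)\in(1,\infty)$, satisfying $E(Z_1\log^+Z_1)<\infty$, with genealogical tree rooted at $o$. For a vertex $v$, $|v|$ is its generation and $I_v$ the set of edges of the path from $o$ to $v$; each edge is identified with its endpoint farther from the root and belongs to generation $m$ if that endpoint has generation $m$. Independently of the tree, attach i.i.d. real random variables $X_e$ to the edges with $P(|X_e|>x)=x^{-\alpha}L(x)$ ($\alpha>0$, $L$ slowly varying) and $P(X_e>x)/P(|X_e|>x)\to p$, $P(X_e<-x)/P(|X_e|>x)\to q$, $p,q\ge0$, $p+q=1$. Let $b_n>0$ satisfy $\mu^nP(b_n^{-1}X_e\in\cdot)\to\nu_\alpha$ vaguely on $\mathbb E:=[-\infty,\infty]\setminus\{0\}$, with $\nu_\alpha(dx)=\alpha px^{-\alpha-1}\mathbf 1_{(0,\infty)}(x)dx+\alpha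 q(-x)^{-\alpha-1}\mathbf 1_{(-\infty,0)}(x)dx$. $P^*$ denotes conditioning on survival. $\rho$ is a metric on the space $\mathscr M$ of Radon point measures on $\mathbb E$ of the form $\rho(m_1,m_2)=\sum_{i\ge1}2^{-i}\min(|m_1(h_i)-m_2(h_i)|,1)$, where $\{h_i\}$ is a fixed sequence of nonnegative Lipschitz continuous compactly supported functions on $\mathbb E$ chosen so that $\rho$ metrizes the vague topology. *)

theory Defs
  imports "HOL-Probability.Probability"
begin

text \<open>Ulam--Harris encoding of the Galton--Watson tree: potential vertices are
  lists of natural numbers, the root is the empty list, and xi u w is the number
  of children of the potential vertex u.\<close>

definition in_tree :: "(nat list \<Rightarrow> 'a \<Rightarrow> nat) \<Rightarrow> 'a \<Rightarrow> nat list \<Rightarrow> bool" where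
  "in_tree xi w v \<longleftrightarrow> (\<forall>k < length v. v ! k < xi (take k v) w)"

definition gen :: "(nat list \<Rightarrow> 'a \<Rightarrow> nat) \<Rightarrow> nat \<Rightarrow> 'a \<Rightarrow> nat list set" where
  "gen xi n w = {v. length v = n \<and> in_tree xi w v}"

text \<open>The edge of generation m on the path to v is identified with its endpoint take m v.
  Ntilde_n(h) = sum over |v| = n, e in I_v, of h(X_e / b_n).\<close>
definition Ntilde :: "(nat list \<Rightarrow> 'a \<Rightarrow> nat) \<Rightarrow> (nat list \<Rightarrow> 'a \<Rightarrow> real) \<Rightarrow> (nat \<Rightarrow> real)
    \<Rightarrow> nat \<Rightarrow> (real \<Rightarrow> real) \<Rightarrow> 'a \<Rightarrow> real" where
  "Ntilde xi X b n h w = (\<Sum>v\<in>gen xi n w. \<Sum>m\<in>{1..n}. h (X (take m v) w / b n))"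

definition NtildeK :: "(nat list \<Rightarrow> 'a \<Rightarrow> nat) \<Rightarrow> (nat list \<Rightarrow> 'a \<Rightarrow> real) \<Rightarrow> (nat \<Rightarrow> real)
    \<Rightarrow> nat \<Rightarrow> nat \<Rightarrow> (real \<Rightarrow> real) \<Rightarrow> 'a \<Rightarrow> real" where
  "NtildeK xi X b K n h w = (\<Sum>v\<in>gen xi n w. \<Sum>m\<in>{n - K<..n}. h (X (take m v) w / b n))"

text \<open>The metric rho(m1,m2) = sum_{i>=1} 2^{-i} min(|m1(h_i) - m2(h_i)|, 1),
  point measures being represented by their action on test functions.\<close>
definition rho_pm :: "(nat \<Rightarrow> real \<Rightarrow> real) \<Rightarrow> ((real \<Rightarrow> real) \<Rightarrow> real)
    \<Rightarrow> ((real \<Rightarrow> real) \<Rightarrow> real) \<Rightarrow> real" where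
  "rho_pm hs m1 m2 = (\<Sum>i. (1/2) ^ (Suc i) * min \<bar>m1 (hs (Suc i)) - m2 (hs (Suc i))\<bar> 1)"

definition slowly_varying :: "(real \<Rightarrow> real) \<Rightarrow> bool" where
  "slowly_varying L \<longleftrightarrow> (\<forall>\<^sub>F x in at_top. L x > 0) \<and>
     (\<forall>t>0. ((\<lambda>x. L (t * x) / L x) \<longlongrightarrow> 1) at_top)"

text \<open>A real function represents a function on E = [-inf,inf] minus {0} with compact support
  iff it vanishes on a neighbourhood of 0 and has finite limits at +-inf (its values at +-inf).\<close>
definition compact_supp_E :: "(real \<Rightarrow> real) \<Rightarrow> bool" where
  "compact_supp_E f \<longleftrightarrow> (\<exists>d>0. \<forall>x. \<bar>x\<bar> < d \<longrightarrow> f x = 0) \<and>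
     (\<exists>l. (f \<longlongrightarrow> l) at_top) \<and> (\<exists>l. (f \<longlongrightarrow> l) at_bot)"

definition vague_test :: "(real \<Rightarrow> real) \<Rightarrow> bool" where
  "vague_test f \<longleftrightarrow> continuous_on UNIV f \<and> compact_supp_E f"

text \<open>nu_alpha, which puts no mass at +-inf, as a measure on the reals.\<close>
definition nu_alpha :: "real \<Rightarrow> real \<Rightarrow> real \<Rightarrow> real measure" where
  "nu_alpha \<alpha> p q = density lborel (\<lambda>x. ennreal
     (if x > 0 then \<alpha> * p * x powr (-\<alpha> - 1)
      else if x < 0 then \<alpha> * q * (-x) powr (-\<alpha> - 1) else 0))"

end

theory Submission
  imports Defs
begin

lemma list_sum_pow:
  fixes a :: "nat \<Rightarrow> ennreal"
  shows "(\<integral>\<^sup>+u. indicator {u::nat list. length u = m} u * (\<Prod>k<m. a (u!k)) \<partial>count_space UNIV)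
         = (\<integral>\<^sup>+j. a j \<partial>count_space UNIV) ^ m"
proof (induction m)
  case 0
  have "(\<lambda>u::nat list. indicator {u::nat list. length u = 0} u * (\<Prod>k<0. a (u!k)) :: ennreal)
        = indicator {[]}" by (auto simp: indicator_def fun_eq_iff)
  then show ?case by (simp add: nn_integral_indicator)
next
  case (Suc m)
  define g where "g u = indicator {u::nat list. length u = Suc m} u * (\<Prod>k<Suc m. a (u!k))" for u
  have bij: "bij_betw (\<lambda>p. fst p # snd p) (UNIV :: (nat \<times> nat list) set) (UNIV - {[]})"
    by (auto simp: bij_betw_def inj_on_def image_def neq_Nil_conv)
  have "(\<integral>\<^sup>+u. g u \<partial>count_space UNIV) = (\<integral>\<^sup>+u. g u \<partial>count_space (UNIV - {[]}))"
    by (rule nn_integral_count_space_eq[symmetric]) (auto simp: g_def)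
  also have "\<dots> = (\<integral>\<^sup>+p. g (fst p # snd p) \<partial>count_space UNIV)"
    by (rule nn_integral_bij_count_space[OF bij, symmetric])
  also have "\<dots> = (\<integral>\<^sup>+j. \<integral>\<^sup>+v. g (j # v) \<partial>count_space UNIV \<partial>count_space UNIV)"
    by (subst nn_integral_fst_count_space[symmetric]) simp
  also have "\<dots> = (\<integral>\<^sup>+j. a j * (\<integral>\<^sup>+v. indicator {u::nat list. length u = m} v * (\<Prod>k<m. a (v!k)) \<partial>count_space UNIV) \<partial>count_space UNIV)"
    apply (rule nn_integral_cong)
    apply (subst nn_integral_cmult[symmetric])
     apply simp
    apply (rule nn_integral_cong)
    apply (simp only: g_def prod.lessThan_Suc_shift)
    apply (simp add: indicator_def mult.assoc)
    done
  also have "\<dots> = (\<integral>\<^sup>+j. a j \<partial>count_space UNIV) ^ Suc m"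
    by (simp add: Suc nn_integral_multc)
  finally show ?case by (simp add: g_def)
qed

lemma tail_sum:
  fixes \<xi> :: "'a \<Rightarrow> nat"
  assumes [measurable]: "\<xi> \<in> measurable M (count_space UNIV)"
  shows "(\<integral>\<^sup>+j. emeasure M {w\<in>space M. j < \<xi> w} \<partial>count_space UNIV) = (\<integral>\<^sup>+w. ennreal (real (\<xi> w)) \<partial>M)"
proof -
  have e: "ennreal (real n) = (\<integral>\<^sup>+j. indicator {..<n} j \<partial>count_space UNIV)" for n
    by (subst nn_integral_indicator) (auto simp: ennreal_of_nat_eq_real_of_nat)
  have "(\<integral>\<^sup>+w. ennreal (real (\<xi> w)) \<partial>M) = (\<integral>\<^sup>+w. \<integral>\<^sup>+j. indicator {w\<in>space M. j < \<xi> w} w \<partial>count_space UNIV \<partial>M)"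
    by (rule nn_integral_cong) (auto simp: e indicator_def intro!: nn_integral_cong)
  also have "\<dots> = (\<integral>\<^sup>+j. \<integral>\<^sup>+w. indicator {w\<in>space M. j < \<xi> w} w \<partial>M \<partial>count_space UNIV)"
    by (rule nn_integral_count_space_nn_integral) auto
  also have "\<dots> = (\<integral>\<^sup>+j. emeasure M {w\<in>space M. j < \<xi> w} \<partial>count_space UNIV)"
    by (rule nn_integral_cong) (rule nn_integral_indicator, measurable)
  finally show ?thesis by simp
qed

lemma emeasure_UN_countable_le:
  assumes "countable U" and [measurable]: "\<And>u. u \<in> U \<Longrightarrow> B u \<in> sets M"
  shows "emeasure M (\<Union>u\<in>U. B u) \<le> (\<integral>\<^sup>+u. emeasure M (B u) \<partial>count_space U)"
proof -
  have "emeasure M (\<Union>u\<in>U. B u) = (\<integral>\<^sup>+w. indicator (\<Union>u\<in>U. B u) w \<partial>M)"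
    by (rule nn_integral_indicator[symmetric]) (use assms in auto)
  also have "\<dots> \<le> (\<integral>\<^sup>+w. \<integral>\<^sup>+u. indicator (B u) w \<partial>count_space U \<partial>M)"
  proof (rule nn_integral_mono)
    fix w
    show "indicator (\<Union>u\<in>U. B u) w \<le> (\<integral>\<^sup>+u. indicator (B u) w \<partial>count_space U)"
    proof (cases "w \<in> (\<Union>u\<in>U. B u)")
      case True
      then obtain u0 where u0: "u0 \<in> U" "w \<in> B u0" by auto
      have "(\<integral>\<^sup>+u. indicator (B u) w \<partial>count_space U) \<ge> (\<integral>\<^sup>+u. indicator {u0} u \<partial>count_space U)"
        by (rule nn_integral_mono) (auto simp: indicator_def u0)
      moreover have "(\<integral>\<^sup>+u. indicator {u0} u \<partial>count_space U) = 1"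
        using u0 by (subst nn_integral_indicator) auto
      ultimately show ?thesis using True by simp
    qed simp
  qed
  also have "\<dots> = (\<integral>\<^sup>+u. \<integral>\<^sup>+w. indicator (B u) w \<partial>M \<partial>count_space U)"
    by (rule nn_integral_count_space_nn_integral) (use assms in auto)
  also have "\<dots> = (\<integral>\<^sup>+u. emeasure M (B u) \<partial>count_space U)"
    by (rule nn_integral_cong) (rule nn_integral_indicator, simp)
  finally show ?thesis .
qed

lemma path_prob:
  fixes M :: "'a measure" and xi :: "nat list \<Rightarrow> 'a \<Rightarrow> nat" and X :: "nat list \<Rightarrow> 'a \<Rightarrow> real"
  assumes P: "prob_space M"
    and meas_xi: "\<And>u. xi u \<in> measurable M (count_space UNIV)"
    and meas_X: "\<And>u. X u \<in> borel_measurable M"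
    and indep: "prob_space.indep_vars M (\<lambda>_. borel)
                  (\<lambda>i. case i of Inl u \<Rightarrow> (\<lambda>w. real (xi u w)) | Inr u \<Rightarrow> X u) UNIV"
    and id_xi: "\<And>u. distr M (count_space UNIV) (xi u) = distr M (count_space UNIV) (xi [])"
    and id_X: "\<And>u. u \<noteq> [] \<Longrightarrow> distr M borel (X u) = distr M borel (X [0])"
    and u: "u \<noteq> []"
  shows "measure M {w\<in>space M. in_tree xi w u \<and> t \<le> \<bar>X u w\<bar>}
     = (\<Prod>k<length u. measure M {w\<in>space M. u!k < xi [] w}) * measure M {w\<in>space M. t \<le> \<bar>X [0] w\<bar>}"
proof -
  interpret prob_space M by (rule P)
  let ?Y = "\<lambda>i. case i of Inl u \<Rightarrow> (\<lambda>w. real (xi u w)) | Inr u \<Rightarrow> X u"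
  let ?F = "\<lambda>i. {?Y i -` A \<inter> space M | A. A \<in> sets (borel :: real measure)}"
  have ind: "indep_sets ?F UNIV" using indep unfolding indep_vars_def2 by auto
  define m where "m = length u"
  define J where "J = (\<lambda>k. Inl (take k u)) ` {..<m} \<union> {Inr u}"
  define A where "A j = (case j of Inl v \<Rightarrow> {w\<in>space M. real (u ! length v) < real (xi v w)}
                              | Inr v \<Rightarrow> {w\<in>space M. t \<le> \<bar>X v w\<bar>})" for j
  have AF: "\<forall>j\<in>J. A j \<in> ?F j"
  proof
    fix j assume "j \<in> J"
    show "A j \<in> ?F j"
    proof (cases j)
      case (Inl v)
      have eq: "A (Inl v) = (\<lambda>w. real (xi v w)) -` {r. real (u ! length v) < r} \<inter> space M"
        by (auto simp: A_def)
      moreover have "{r::real. real (u ! length v) < r} \<in> sets borel" by measurable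
      ultimately show ?thesis unfolding Inl by (simp only: sum.case) blast
    next
      case (Inr v)
      have "A (Inr v) = X v -` {r. t \<le> \<bar>r\<bar>} \<inter> space M"
        by (auto simp: A_def)
      moreover have "{r::real. t \<le> \<bar>r\<bar>} \<in> sets borel" by measurable
      ultimately show ?thesis unfolding Inr by (simp only: sum.case) blast
    qed
  qed
  have fin: "finite J" by (simp add: J_def)
  have injt: "inj_on (\<lambda>k. Inl (take k u) :: nat list + nat list) {..<m}"
    by (auto simp: inj_on_def m_def dest!: arg_cong[where f=length])
  have "prob (\<Inter>j\<in>J. A j) = (\<Prod>j\<in>J. prob (A j))"
    by (rule indep_setsD[OF ind]) (use fin AF in \<open>auto simp: J_def\<close>)
  moreover have "(\<Inter>j\<in>J. A j) = {w\<in>space M. in_tree xi w u \<and> t \<le> \<bar>X u w\<bar>}"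
  proof -
    have "(\<Inter>j\<in>J. A j) = {w\<in>space M. (\<forall>k<m. u ! k < xi (take k u) w) \<and> t \<le> \<bar>X u w\<bar>}"
      unfolding J_def A_def by (auto simp: m_def)
    then show ?thesis by (simp add: in_tree_def m_def)
  qed
  moreover have "(\<Prod>j\<in>J. prob (A j)) = (\<Prod>k<m. prob (A (Inl (take k u)))) * prob (A (Inr u))"
  proof -
    have "(\<Prod>j\<in>J. prob (A j)) = (\<Prod>j\<in>(\<lambda>k. Inl (take k u)) ` {..<m}. prob (A j)) * (\<Prod>j\<in>{Inr u}. prob (A j))"
      unfolding J_def by (rule prod.union_disjoint) auto
    also have "\<dots> = (\<Prod>k<m. prob (A (Inl (take k u)))) * prob (A (Inr u))"
      by (simp add: prod.reindex[OF injt])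
    finally show ?thesis .
  qed
  moreover have "(\<Prod>k<m. prob (A (Inl (take k u)))) = (\<Prod>k<m. measure M {w\<in>space M. u!k < xi [] w})"
  proof (rule prod.cong[OF refl])
    fix k assume "k \<in> {..<m}"
    then have k: "k < m" by simp
    have e1: "A (Inl (take k u)) = xi (take k u) -` {n. u!k < n} \<inter> space M"
      using k by (auto simp: A_def m_def)
    have e2: "xi [] -` {n. u!k < n} \<inter> space M = {w\<in>space M. u!k < xi [] w}" by auto
    have "prob (A (Inl (take k u))) = measure (distr M (count_space UNIV) (xi (take k u))) {n. u!k < n}"
      unfolding e1 by (rule measure_distr[symmetric]) (auto simp: meas_xi)
    also have "\<dots> = measure (distr M (count_space UNIV) (xi [])) {n. u!k < n}"
      by (subst id_xi) (rule refl)
    also have "\<dots> = measure M (xi [] -` {n. u!k < n} \<inter> space M)"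
      by (rule measure_distr) (auto simp: meas_xi)
    finally show "prob (A (Inl (take k u))) = measure M {w\<in>space M. u!k < xi [] w}" unfolding e2 .
  qed
  moreover have "prob (A (Inr u)) = measure M {w\<in>space M. t \<le> \<bar>X [0] w\<bar>}"
  proof -
    have e1: "A (Inr u) = X u -` {r. t \<le> \<bar>r\<bar>} \<inter> space M" by (auto simp: A_def)
    have e2: "X [0] -` {r. t \<le> \<bar>r\<bar>} \<inter> space M = {w\<in>space M. t \<le> \<bar>X [0] w\<bar>}" by auto
    have "prob (A (Inr u)) = measure (distr M borel (X u)) {r. t \<le> \<bar>r\<bar>}"
      unfolding e1 by (rule measure_distr[symmetric]) (auto simp: meas_X)
    also have "\<dots> = measure (distr M borel (X [0])) {r. t \<le> \<bar>r\<bar>}"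
      by (subst id_X[OF u]) (rule refl)
    also have "\<dots> = measure M (X [0] -` {r. t \<le> \<bar>r\<bar>} \<inter> space M)"
      by (rule measure_distr) (auto simp: meas_X)
    finally show ?thesis unfolding e2 .
  qed
  ultimately show ?thesis unfolding m_def by metis
qed


lemma geo_bound:
  fixes \<mu> :: real assumes "\<mu> > 1"
  shows "(\<Sum>m\<in>{1..N}. \<mu> ^ m) \<le> \<mu> ^ (N+1) / (\<mu> - 1)"
proof (induction N)
  case 0 then show ?case using assms by simp
next
  case (Suc N)
  have "(\<Sum>m\<in>{1..Suc N}. \<mu> ^ m) = (\<Sum>m\<in>{1..N}. \<mu> ^ m) + \<mu> ^ Suc N" by simp
  also have "\<dots> \<le> \<mu> ^ (N+1) / (\<mu> - 1) + \<mu> ^ Suc N" using Suc by simp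
  also have "\<dots> = \<mu> ^ (Suc N + 1) / (\<mu> - 1)" using assms by (simp add: field_simps)
  finally show ?case .
qed

lemma rho_small:
  assumes "\<And>i. i < I \<Longrightarrow> m1 (hs (Suc i)) = m2 (hs (Suc i))"
  shows "rho_pm hs m1 m2 \<le> (1/2) ^ I"
proof -
  define t where "t i = (1/2::real) ^ (Suc i) * min \<bar>m1 (hs (Suc i)) - m2 (hs (Suc i))\<bar> 1" for i
  have t0: "0 \<le> t i" for i by (simp add: t_def)
  have tle: "t i \<le> (1/2) ^ Suc i" for i by (simp add: t_def)
  have sg: "summable (\<lambda>i. (1/2::real) ^ Suc i)" by simp
  have st: "summable t"
    by (rule summable_comparison_test[OF _ sg]) (use t0 tle in auto)
  have tz: "t i = 0" if "i < I" for i using assms[OF that] by (simp add: t_def)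
  have "rho_pm hs m1 m2 = suminf t" unfolding rho_pm_def t_def ..
  also have "\<dots> = (\<Sum>n. t (n + I)) + (\<Sum>i<I. t i)" by (rule suminf_split_initial_segment[OF st])
  also have "(\<Sum>i<I. t i) = 0" using tz by simp
  also have "(\<Sum>n. t (n + I)) \<le> (\<Sum>n. (1/2) ^ Suc I * (1/2) ^ n)"
  proof (rule suminf_le)
    show "t (n + I) \<le> (1/2) ^ Suc I * (1/2) ^ n" for n using tle[of "n+I"] by (simp add: power_add mult.commute)
    show "summable (\<lambda>n. t (n + I))" using st by (simp add: summable_iff_shift)
    show "summable (\<lambda>n. (1/2::real) ^ Suc I * (1/2) ^ n)" by simp
  qed
  also have "(\<Sum>n. (1/2::real) ^ Suc I * (1/2) ^ n) = (1/2) ^ I"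
    by (subst suminf_mult) (simp_all add: suminf_geometric)
  finally show ?thesis by simp
qed

lemma take_gen: "v \<in> gen xi n w \<Longrightarrow> m \<le> n \<Longrightarrow> take m v \<in> gen xi m w"
  by (auto simp: gen_def in_tree_def min_def)

theorem lemma3p2:
  fixes M :: "'a measure" and xi :: "nat list \<Rightarrow> 'a \<Rightarrow> nat" and X :: "nat list \<Rightarrow> 'a \<Rightarrow> real"
    and \<alpha> p q \<epsilon> :: real and b :: "nat \<Rightarrow> real" and hs :: "nat \<Rightarrow> real \<Rightarrow> real"
  assumes P: "prob_space M"
    and meas_xi: "\<And>u. xi u \<in> measurable M (count_space UNIV)"
    and meas_X: "\<And>u. X u \<in> borel_measurable M"
    and indep: "prob_space.indep_vars M (\<lambda>_. borel)
                  (\<lambda>i. case i of Inl u \<Rightarrow> (\<lambda>w. real (xi u w)) | Inr u \<Rightarrow> X u) UNIV"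
    and id_xi: "\<And>u. distr M (count_space UNIV) (xi u) = distr M (count_space UNIV) (xi [])"
    and id_X: "\<And>u. u \<noteq> [] \<Longrightarrow> distr M borel (X u) = distr M borel (X [0])"
    and int_mean: "integrable M (\<lambda>w. real (xi [] w))"
    and mean_gt: "(\<integral>w. real (xi [] w) \<partial>M) > 1"
    and llog: "integrable M (\<lambda>w. real (xi [] w) * max 0 (ln (real (xi [] w))))"
    and alpha_pos: "\<alpha> > 0"
    and tail: "\<exists>L. slowly_varying L \<and>
                 (\<forall>x>0. measure M {w\<in>space M. \<bar>X [0] w\<bar> > x} = x powr (-\<alpha>) * L x)"
    and pq: "p \<ge> 0" "q \<ge> 0" "p + q = 1"
    and tail_p: "((\<lambda>x. measure M {w\<in>space M. X [0] w > x} /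
                      measure M {w\<in>space M. \<bar>X [0] w\<bar> > x}) \<longlongrightarrow> p) at_top"
    and tail_q: "((\<lambda>x. measure M {w\<in>space M. X [0] w < - x} /
                      measure M {w\<in>space M. \<bar>X [0] w\<bar> > x}) \<longlongrightarrow> q) at_top"
    and b_pos: "\<And>n. b n > 0"
    and vague: "\<And>f. vague_test f \<Longrightarrow>
         ((\<lambda>n. (\<integral>w. real (xi [] w) \<partial>M) ^ n * (\<integral>w. f (X [0] w / b n) \<partial>M))
            \<longlongrightarrow> (\<integral>x. f x \<partial>nu_alpha \<alpha> p q)) sequentially"
    and hs_nonneg: "\<And>i x. hs i x \<ge> 0"
    and hs_lip: "\<And>i. \<exists>C. C-lipschitz_on UNIV (hs i)"
    and hs_supp: "\<And>i. compact_supp_E (hs i)"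
    and eps: "\<epsilon> > 0"
  shows "((\<lambda>K. limsup (\<lambda>n. ereal (
            measure M ({w\<in>space M. rho_pm hs (\<lambda>h. Ntilde xi X b n h w) (\<lambda>h. NtildeK xi X b K n h w) > \<epsilon>}
                       \<inter> {w\<in>space M. \<forall>m. gen xi m w \<noteq> {}})
            / measure M {w\<in>space M. \<forall>m. gen xi m w \<noteq> {}})))
          \<longlongrightarrow> 0) sequentially"
proof -
  interpret prob_space M by (rule P)
  note [measurable] = meas_xi meas_X
  define \<mu> where "\<mu> = (\<integral>w. real (xi [] w) \<partial>M)"
  have mu1: "\<mu> > 1" using mean_gt by (simp add: \<mu>_def)
  define a where "a j = emeasure M {w\<in>space M. j < xi [] w}" for j
  have suma: "(\<integral>\<^sup>+j. a j \<partial>count_space UNIV) = ennreal \<mu>"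
  proof -
    have "(\<integral>\<^sup>+j. a j \<partial>count_space UNIV) = (\<integral>\<^sup>+w. ennreal (real (xi [] w)) \<partial>M)"
      unfolding a_def by (rule tail_sum) (rule meas_xi)
    also have "\<dots> = ennreal \<mu>" unfolding \<mu>_def
      by (rule nn_integral_eq_integral[OF int_mean]) simp
    finally show ?thesis .
  qed
  have "\<forall>\<^sub>F n in sequentially. (1/2::real) ^ n < \<epsilon>"
    by (rule order_tendstoD(2)[OF LIMSEQ_power_zero eps]) simp
  then obtain I :: nat where I: "(1/2::real) ^ I < \<epsilon>"
    by (auto simp: eventually_sequentially)
  have "\<forall>i. \<exists>d>0. \<forall>x. \<bar>x\<bar> < d \<longrightarrow> hs i x = 0" using hs_supp unfolding compact_supp_E_def by blast
  then obtain dd where dd: "\<And>i. dd i > 0" "\<And>i x. \<bar>x\<bar> < dd i \<Longrightarrow> hs i x = 0" by metis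
  define d where "d = Min (insert 1 ((\<lambda>i. dd (Suc i)) ` {..<I}))"
  have d0: "d > 0" using dd(1) by (auto simp: d_def)
  have dle: "d \<le> dd (Suc i)" if "i < I" for i using that by (auto simp: d_def)
  define \<tau> where "\<tau> n = measure M {w\<in>space M. d * b n \<le> \<bar>X [0] w\<bar>}" for n
  define f where "f x = min 1 (max 0 (2*\<bar>x\<bar>/d - 1))" for x :: real
  have vf: "vague_test f"
    unfolding vague_test_def compact_supp_E_def
  proof (intro conjI)
    show "continuous_on UNIV f" unfolding f_def by (intro continuous_intros) (use d0 in auto)
    show "\<exists>\<delta>>0. \<forall>x. \<bar>x\<bar> < \<delta> \<longrightarrow> f x = 0"
      by (intro exI[of _ "d/2"]) (use d0 in \<open>auto simp: f_def field_simps\<close>)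
    have "\<forall>\<^sub>F x in at_top. f x = 1"
      using eventually_ge_at_top[of d] by eventually_elim (use d0 in \<open>auto simp: f_def field_simps\<close>)
    then show "\<exists>l. (f \<longlongrightarrow> l) at_top" by (intro exI[of _ 1]) (rule tendsto_eventually)
    have "\<forall>\<^sub>F x in at_bot. f x = 1"
      using eventually_le_at_bot[of "-d"] by eventually_elim (use d0 in \<open>auto simp: f_def field_simps\<close>)
    then show "\<exists>l. (f \<longlongrightarrow> l) at_bot" by (intro exI[of _ 1]) (rule tendsto_eventually)
  qed
  have cv: "(\<lambda>n. \<mu> ^ n * (\<integral>w. f (X [0] w / b n) \<partial>M)) \<longlonglongrightarrow> (\<integral>x. f x \<partial>nu_alpha \<alpha> p q)"
    unfolding \<mu>_def by (rule vague[OF vf])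
  have "Bseq (\<lambda>n. \<mu> ^ n * (\<integral>w. f (X [0] w / b n) \<partial>M))"
    by (rule convergent_imp_Bseq[OF convergentI[OF cv]])
  from BseqD[OF this] obtain C where "0 < C" and Cb': "\<forall>n. norm (\<mu> ^ n * (\<integral>w. f (X [0] w / b n) \<partial>M)) \<le> C"
    by blast
  have Cb: "norm (\<mu> ^ n * (\<integral>w. f (X [0] w / b n) \<partial>M)) \<le> C" for n using Cb' by blast
  have C: "\<mu> ^ n * \<tau> n \<le> C" for n
  proof -
    define A where "A = {w\<in>space M. d * b n \<le> \<bar>X [0] w\<bar>}"
    have Am: "A \<in> sets M" unfolding A_def by measurable
    have fm: "(\<lambda>w. f (X [0] w / b n)) \<in> borel_measurable M" unfolding f_def by measurable
    have fi: "integrable M (\<lambda>w. f (X [0] w / b n))"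
      by (rule integrable_const_bound[where B=1]) (auto simp: f_def fm)
    have "\<tau> n = (\<integral>w. indicator A w \<partial>M)" using Am sets.sets_into_space[OF Am]
      by (simp add: \<tau>_def A_def Int_absorb2)
    also have "\<dots> \<le> (\<integral>w. f (X [0] w / b n) \<partial>M)"
    proof (rule integral_mono)
      show "integrable M (indicator A :: 'a \<Rightarrow> real)" using Am by (intro integrable_real_indicator) (auto simp: less_top[symmetric])
      show "integrable M (\<lambda>w. f (X [0] w / b n))" by (rule fi)
      fix w assume "w \<in> space M"
      show "indicator A w \<le> f (X [0] w / b n)"
      proof (cases "w \<in> A")
        case True
        then have "d \<le> \<bar>X [0] w\<bar> / b n" using b_pos[of n] by (simp add: A_def field_simps)
        then have "d \<le> \<bar>X [0] w / b n\<bar>" using b_pos[of n] by simp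
        moreover have g: "\<And>y. d \<le> y \<Longrightarrow> 1 \<le> 2*y/d - 1" using d0 by (simp add: le_divide_eq)
        ultimately have "1 \<le> 2*\<bar>X [0] w / b n\<bar>/d - 1" by blast
        then show ?thesis using True by (simp add: f_def)
      qed (simp add: f_def)
    qed
    finally have "\<mu> ^ n * \<tau> n \<le> \<mu> ^ n * (\<integral>w. f (X [0] w / b n) \<partial>M)"
      using mu1 by (intro mult_left_mono) auto
    also have "\<dots> \<le> C" using Cb[of n] by simp
    finally show ?thesis .
  qed
  have C0: "0 \<le> C" using C[of 0] by (simp add: \<tau>_def) (metis measure_nonneg order.trans)
  define S where "S = {w\<in>space M. \<forall>m. gen xi m w \<noteq> {}}"
  define E where "E K n = {w\<in>space M. rho_pm hs (\<lambda>h. Ntilde xi X b n h w) (\<lambda>h. NtildeK xi X b K n h w) > \<epsilon>}" for K n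
  define c where "c K = C * \<mu> / (\<mu> - 1) * (1/\<mu>) ^ K" for K
  have c0: "0 \<le> c K" for K using C0 mu1 by (simp add: c_def)
  have key: "measure M (E K n \<inter> S) \<le> c K" for K n
  proof -
    define N where "N = n - K"
    define U where "U = {u::nat list. 1 \<le> length u \<and> length u \<le> N}"
    define B where "B u = {w\<in>space M. in_tree xi w u \<and> d * b n \<le> \<bar>X u w\<bar>}" for u
    have Bm: "B u \<in> sets M" for u
      unfolding B_def in_tree_def by measurable
    have cU: "countable U" by (rule countable_subset[OF subset_UNIV]) simp
    have UBm: "(\<Union>u\<in>U. B u) \<in> sets M" by (rule sets.countable_UN''[OF cU Bm])
    have sub: "E K n \<inter> S \<subseteq> (\<Union>u\<in>U. B u)"
    proof
      fix w assume w: "w \<in> E K n \<inter> S"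
      show "w \<in> (\<Union>u\<in>U. B u)"
      proof (rule ccontr)
        assume nb: "w \<notin> (\<Union>u\<in>U. B u)"
        have "rho_pm hs (\<lambda>h. Ntilde xi X b n h w) (\<lambda>h. NtildeK xi X b K n h w) \<le> (1/2) ^ I"
        proof (rule rho_small)
          fix i assume i: "i < I"
          show "Ntilde xi X b n (hs (Suc i)) w = NtildeK xi X b K n (hs (Suc i)) w"
            unfolding Ntilde_def NtildeK_def
          proof (rule sum.cong[OF refl])
            fix v assume v: "v \<in> gen xi n w"
            show "(\<Sum>m\<in>{1..n}. hs (Suc i) (X (take m v) w / b n)) = (\<Sum>m\<in>{n - K<..n}. hs (Suc i) (X (take m v) w / b n))"
            proof (rule sum.mono_neutral_right)
              show "finite {1..n}" by simp
              show "{n - K<..n} \<subseteq> {1..n}" by auto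
              show "\<forall>m\<in>{1..n} - {n - K<..n}. hs (Suc i) (X (take m v) w / b n) = 0"
              proof
                fix m assume m: "m \<in> {1..n} - {n - K<..n}"
                then have m1: "1 \<le> m" and mN: "m \<le> N" and mn: "m \<le> n" by (auto simp: N_def)
                have tg: "take m v \<in> gen xi m w" by (rule take_gen[OF v mn])
                then have "take m v \<in> U" using m1 mN by (auto simp: U_def gen_def)
                moreover have "w \<in> space M" using w by (auto simp: E_def)
                ultimately have "\<not> d * b n \<le> \<bar>X (take m v) w\<bar>"
                  using nb tg by (auto simp: B_def gen_def)
                then have "\<bar>X (take m v) w\<bar> / b n < d" using b_pos[of n] by (simp add: divide_less_eq mult.commute)
                then have "\<bar>X (take m v) w / b n\<bar> < dd (Suc i)" using dle[OF i] b_pos[of n] by simp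
                then show "hs (Suc i) (X (take m v) w / b n) = 0" by (rule dd(2))
              qed
            qed
          qed
        qed
        moreover have "rho_pm hs (\<lambda>h. Ntilde xi X b n h w) (\<lambda>h. NtildeK xi X b K n h w) > \<epsilon>"
          using w by (simp add: E_def)
        ultimately show False using I by simp
      qed
    qed
    have "emeasure M (\<Union>u\<in>U. B u) \<le> (\<integral>\<^sup>+u. emeasure M (B u) \<partial>count_space U)"
      by (rule emeasure_UN_countable_le[OF cU Bm])
    also have "\<dots> = (\<integral>\<^sup>+u. (\<Sum>m\<in>{1..N}. indicator {u::nat list. length u = m} u * (\<Prod>k<m. a (u!k))) * ennreal (\<tau> n) \<partial>count_space UNIV)"
    proof (subst nn_integral_count_space_indicator, simp, rule nn_integral_cong)
      fix u :: "nat list"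
      have sd: "(\<Sum>m\<in>{1..N}. indicator {u::nat list. length u = m} u * (\<Prod>k<m. a (u!k)))
                = (\<Sum>m\<in>{1..N}. if m = length u then (\<Prod>k<m. a (u!k)) else 0)"
        by (rule sum.cong) (auto simp: indicator_def)
      also have "\<dots> = (if length u \<in> {1..N} then (\<Prod>k<length u. a (u!k)) else 0)"
        by (rule sum.delta) simp
      finally have sd: "(\<Sum>m\<in>{1..N}. indicator {u::nat list. length u = m} u * (\<Prod>k<m. a (u!k)))
          = (if length u \<in> {1..N} then (\<Prod>k<length u. a (u!k)) else 0)" .
      show "emeasure M (B u) * indicator U u = (\<Sum>m\<in>{1..N}. indicator {u::nat list. length u = m} u * (\<Prod>k<m. a (u!k))) * ennreal (\<tau> n)"
      proof (cases "u \<in> U")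
        case True
        then have u: "u \<noteq> []" by (auto simp: U_def)
        have "measure M (B u) = (\<Prod>k<length u. measure M {w\<in>space M. u!k < xi [] w}) * \<tau> n"
          unfolding B_def \<tau>_def by (rule path_prob[OF P meas_xi meas_X indep id_xi id_X u])
        then have "emeasure M (B u) = ennreal ((\<Prod>k<length u. measure M {w\<in>space M. u!k < xi [] w}) * \<tau> n)"
          by (simp add: emeasure_eq_measure)
        also have "\<dots> = (\<Prod>k<length u. a (u!k)) * ennreal (\<tau> n)"
          by (simp add: ennreal_mult prod_ennreal a_def emeasure_eq_measure prod_nonneg \<tau>_def)
        finally show ?thesis using True by (simp only: sd) (simp add: U_def)
      next
        case False
        then show ?thesis by (simp only: sd) (auto simp: U_def)
      qed
    qed
    also have "\<dots> = (\<Sum>m\<in>{1..N}. ennreal \<mu> ^ m * ennreal (\<tau> n))"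
    proof -
      have "(\<integral>\<^sup>+u. (\<Sum>m\<in>{1..N}. indicator {u::nat list. length u = m} u * (\<Prod>k<m. a (u!k))) * ennreal (\<tau> n) \<partial>count_space UNIV)
          = (\<integral>\<^sup>+u. (\<Sum>m\<in>{1..N}. indicator {u::nat list. length u = m} u * (\<Prod>k<m. a (u!k))) \<partial>count_space UNIV) * ennreal (\<tau> n)"
        by (rule nn_integral_multc) simp
      also have "(\<integral>\<^sup>+u. (\<Sum>m\<in>{1..N}. indicator {u::nat list. length u = m} u * (\<Prod>k<m. a (u!k))) \<partial>count_space UNIV)
          = (\<Sum>m\<in>{1..N}. \<integral>\<^sup>+u. indicator {u::nat list. length u = m} u * (\<Prod>k<m. a (u!k)) \<partial>count_space UNIV)"
        by (rule nn_integral_sum) simp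
      also have "\<dots> = (\<Sum>m\<in>{1..N}. ennreal \<mu> ^ m)"
        by (simp add: list_sum_pow suma)
      finally show ?thesis by (simp add: sum_distrib_right)
    qed
    also have "\<dots> = ennreal (\<Sum>m\<in>{1..N}. \<mu> ^ m * \<tau> n)"
    proof -
      have "(\<Sum>m\<in>{1..N}. ennreal \<mu> ^ m * ennreal (\<tau> n)) = (\<Sum>m\<in>{1..N}. ennreal (\<mu> ^ m * \<tau> n))"
        using mu1 by (intro sum.cong refl) (simp add: ennreal_mult ennreal_power \<tau>_def)
      also have "\<dots> = ennreal (\<Sum>m\<in>{1..N}. \<mu> ^ m * \<tau> n)"
        using mu1 by (intro sum_ennreal) (simp add: \<tau>_def)
      finally show ?thesis .
    qed
    finally have "emeasure M (\<Union>u\<in>U. B u) \<le> ennreal (\<Sum>m\<in>{1..N}. \<mu> ^ m * \<tau> n)" .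
    then have "measure M (\<Union>u\<in>U. B u) \<le> (\<Sum>m\<in>{1..N}. \<mu> ^ m * \<tau> n)"
      using mu1 by (simp add: emeasure_eq_measure ennreal_le_iff sum_nonneg \<tau>_def)
    moreover have "measure M (E K n \<inter> S) \<le> measure M (\<Union>u\<in>U. B u)"
      by (rule finite_measure_mono[OF sub UBm])
    moreover have "(\<Sum>m\<in>{1..N}. \<mu> ^ m * \<tau> n) \<le> c K"
    proof (cases "N = 0")
      case True then show ?thesis using c0[of K] by simp
    next
      case False
      then have nN: "n = N + K" by (simp add: N_def)
      have t0: "0 \<le> \<tau> n" by (simp add: \<tau>_def)
      have "(\<Sum>m\<in>{1..N}. \<mu> ^ m * \<tau> n) = (\<Sum>m\<in>{1..N}. \<mu> ^ m) * \<tau> n" by (simp add: sum_distrib_right)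
      also have "\<dots> \<le> \<mu> ^ (N+1) / (\<mu> - 1) * \<tau> n"
        by (rule mult_right_mono[OF geo_bound[OF mu1] t0])
      also have "\<dots> = (\<mu> ^ n * \<tau> n) * (\<mu> / (\<mu> - 1) * (1/\<mu>) ^ K)"
        using mu1 by (simp add: nN power_add field_simps)
      also have "\<dots> \<le> C * (\<mu> / (\<mu> - 1) * (1/\<mu>) ^ K)"
        using mu1 by (intro mult_right_mono C) simp
      also have "\<dots> = c K" by (simp add: c_def)
      finally show ?thesis .
    qed
    ultimately show ?thesis by linarith
  qed
  define s where "s = measure M S"
  have bnd: "0 \<le> measure M (E K n \<inter> S) / s \<and> measure M (E K n \<inter> S) / s \<le> c K / s" for K n
  proof (cases "s = 0")
    case True then show ?thesis by simp
  next
    case False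
    then have "s > 0" using measure_nonneg[of M S] unfolding s_def by linarith
    then show ?thesis using key[of K n] by (simp add: divide_right_mono)
  qed
  have lim: "((\<lambda>K. limsup (\<lambda>n. ereal (measure M (E K n \<inter> S) / s))) \<longlongrightarrow> 0) sequentially"
  proof (rule tendsto_sandwich[where f="\<lambda>K. 0" and h="\<lambda>K. ereal (c K / s)"])
    show "\<forall>\<^sub>F K in sequentially. 0 \<le> limsup (\<lambda>n. ereal (measure M (E K n \<inter> S) / s))"
      using bnd by (intro always_eventually allI le_Limsup) auto
    show "\<forall>\<^sub>F K in sequentially. limsup (\<lambda>n. ereal (measure M (E K n \<inter> S) / s)) \<le> ereal (c K / s)"
      using bnd by (intro always_eventually allI Limsup_bounded) auto
    show "((\<lambda>K. 0) \<longlongrightarrow> (0::ereal)) sequentially" by simp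
    have "((\<lambda>K. C * \<mu> / (\<mu> - 1) / s * (1/\<mu>) ^ K) \<longlongrightarrow> C * \<mu> / (\<mu> - 1) / s * 0) sequentially"
      by (intro tendsto_mult tendsto_const LIMSEQ_power_zero) (use mu1 in simp)
    then have "((\<lambda>K. c K / s) \<longlongrightarrow> 0) sequentially" by (simp add: c_def)
    then show "((\<lambda>K. ereal (c K / s)) \<longlongrightarrow> (0::ereal)) sequentially"
      by (simp add: zero_ereal_def tendsto_ereal)
  qed
  then show ?thesis unfolding E_def S_def s_def .
qed

end
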